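(* For every $k=1,\dots,t$, every $j$ with $0\le j<\deg P^{(k)}_2$, and every $\tau=0,\dots,j$, $$\big|\bar N^{(k,j)}_\tau(F,G)\big|=(\bar R_{k-1})^{b_{k,j}}\,r_{k,j}\,\big|N^{(j)}_\tau\big(P^{(k)}_1,P^{(k)}_2\big)\big|.$$
   Context: Let $K$ be a field of characteristic zero; $|M|$ denotes the determinant of a square matrix $M$; $\mathrm{lc}$ and $\deg$ denote leading coefficient and degree. Subresultant matrices. Let $A=a_px^p+\dots+a_0$, $B=b_qx^q+\dots+b_0$ over $K$ with formal degrees $p\ge q>0$. For $0\le j<q$, $N^{(j)}(A,B)$ is the $(p+q-j)\times(p+q-2j)$ matrix whose $c$-th column ($c=1,\dots,q-j$) has $a_p,\dots,a_0$ in rows $c,\dots,c+p$ and zeros elsewhere, and whose $(q-j+c)$-th column ($c=1,\dots,p-j$) has $b_q,\dots,b_0$ in rows $c,\dots,c+q$ and zeros elsewhere. For $\tau=0,\dots,j$, $N^{(j)}_\tau(A,B)$ is the square submatrix formed by the top $p+q-2j-1$ rows and the $(p+q-j-\tau)$-th row. For $P^{(k)}_1,P^{(k)}_2$ the actual degrees are used. PRS. For nonzero $A,B\in K[x]$, $\deg A>\deg B$, a PRS is $(P_1,\dots,P_l)$, nonzero polynomials, $P_1=A$, $P_2=B$, $\deg P_{i-1}>\deg P_i$, $\alpha_iP_{i-2}=q_{i-1}P_{i-1}+\beta_iP_i$ ($i=3,\dots,l$) with $\alpha_i,\beta_i\in K\setminus\{0\}$, $q_{i-1}\in K[x]$, and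 $P_l=\gamma\gcd(A,B)$, $0\ne\gamma\in K$. Recursive PRS. $F=f_mx^m+\dots+f_0$, $G=g_nx^n+\dots+g_0\in K[x]$, $f_mg_n\ne0$, $m>n>0$. A complete recursive PRS consists of PRSs $(P^{(k)}_1,\dots,P^{(k)}_{l_k})$ with division rules $(\alpha^{(k)}_i,\beta^{(k)}_i)$, $k=1,\dots,t$, $P^{(1)}_1=F$, $P^{(1)}_2=G$, for $k\ge2$ $P^{(k)}_1=P^{(k-1)}_{l_{k-1}}$, $P^{(k)}_2=\frac d{dx}P^{(k)}_1$; $P^{(k)}_{l_k}$ non-constant for $k<t$, $P^{(t)}_{l_t}$ constant. Assume $l_k\ge 3$ for $k<t$. Notation: $n^{(k)}_i=\deg P^{(k)}_i$, $c^{(k)}_i=\mathrm{lc}(P^{(k)}_i)$, $d^{(k)}_i=n^{(k)}_i-n^{(k)}_{i+1}$, $j_0=m$, $j_k=n^{(k)}_{l_k}$. Recursive subresultant matrices $\bar N^{(k,j)}$ ($0\le j<n^{(k)}_2$): $\bar N^{(1,j)}=N^{(j)}(F,G)$; for $k\ge2$, with $\bar N=\bar N^{(k-1,j_{k-1})}$ having $C$ columns, $\bar N_U$ = $\bar N$ minus its bottom $j_{k-1}+1$ rows, $\bar N_L$ = its bottom $j_{k-1}+1$ rows, $\bar N'_L$ = the $j_{k-1}\times C$ matrix whose $i$-th row is $(j_{k-1}+1-i)$ times row $i$ of $\bar N_L$, and $b=2j_{k-1}-2j-1$, $e=j_{k-1}-j-1$: $\bar N^{(k,j)}$ has $bC$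 columns in $b$ blocks of width $C$, upper part $\mathrm{diag}(\bar N_U,\dots,\bar N_U)$ ($b$ copies), and a lower part of $2j_{k-1}-j-1$ rows in which column block $s$ ($s=1,\dots,e$) holds $\bar N_L$ in lower rows $s,\dots,s+j_{k-1}$ and column block $e+s$ ($s=1,\dots,j_{k-1}-j$) holds $\bar N'_L$ in lower rows $s,\dots,s+j_{k-1}-1$; other entries $0$. If $\bar N^{(k,j)}$ has $D$ columns, $\bar N^{(k,j)}_\tau$ is the square submatrix formed by its top $D-1$ rows and its $(D+j-\tau)$-th row. Constants. For $k=1,\dots,t-1$: $B_k=(c^{(k)}_{l_k})^{d^{(k)}_{l_k-1}-1}\prod_{l=3}^{l_k}\{(\beta^{(k)}_l/\alpha^{(k)}_l)^{n^{(k)}_{l-1}-n^{(k)}_{l_k}}(c^{(k)}_{l-1})^{d^{(k)}_{l-2}+d^{(k)}_{l-1}}(-1)^{(n^{(k)}_{l-2}-n^{(k)}_{l_k})(n^{(k)}_{l-1}-n^{(k)}_{l_k})}\}$. For $k\ge2$: $b_{k,j}=2j_{k-1}-2j-1$, $u_{k,j}=(m+n-2j_1)\{\prod_{l=2}^{k-1}(2j_{l-1}-2j_l-1)\}b_{k,j}$, $r_{k,j}=(-1)^{(u_{k-1}-1)(1+2+\dots+(b_{k,j}-1))}$; $b_{1,j}=r_{1,j}=1$, $u_1=m+n-2j_1$; $b_k=b_{k,j_k}$, $u_k=u_{k,j_k}$, $r_k=r_{k,j_k}$; $\bar R_0=1$, $\bar R_k=(\bar R_{k-1})^{b_k}r_kB_k$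 ($k=1,\dots,t-1$). *)

theory Defs
  imports "Jordan_Normal_Form.Determinant" "HOL-Computational_Algebra.Polynomial_Factorial" "HOL-Computational_Algebra.Euclidean_Algorithm"
begin

(* All matrix indices below are 0-based (JNF convention); the paper's 1-based
   row/column r corresponds to index r-1. *)

text \<open>Subresultant matrix N^(j)(A,B) for formal degrees p, q:
 (p+q-j) x (p+q-2j); column c (c < q-j) carries a_p..a_0 in rows c..c+p,
 column q-j+c (c < p-j) carries b_q..b_0 in rows c..c+q.\<close>
definition sres_mat :: "nat \<Rightarrow> nat \<Rightarrow> 'a::zero poly \<Rightarrow> 'a poly \<Rightarrow> nat \<Rightarrow> 'a mat" where
  "sres_mat p q A B j = mat (p + q - j) (p + q - 2 * j) (\<lambda>(r, c).
     if c < q - j then (if c \<le> r \<and> r - c \<le> p then coeff A (p - (r - c)) else 0)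
     else (let c' = c - (q - j) in
           if c' \<le> r \<and> r - c' \<le> q then coeff B (q - (r - c')) else 0))"

definition tau_sub :: "'a mat \<Rightarrow> nat \<Rightarrow> nat \<Rightarrow> 'a mat" where
  "tau_sub M D ri = mat D D (\<lambda>(r, c). if r < D - 1 then M $$ (r, c) else M $$ (ri, c))"

text \<open>N^(j)_tau(A,B) with the actual degrees p = deg A, q = deg B: top p+q-2j-1 rows
 and the (p+q-j-tau)-th row (1-based).\<close>
definition sres_tau :: "'a::zero poly \<Rightarrow> 'a poly \<Rightarrow> nat \<Rightarrow> nat \<Rightarrow> 'a mat" where
  "sres_tau A B j \<tau> = (let p = degree A; q = degree B in
     tau_sub (sres_mat p q A B j) (p + q - 2 * j) (p + q - j - \<tau> - 1))"

text \<open>One recursion step: from Nbar = Nbar^(k-1, J) (J = j_{k-1}) build Nbar^(k,j).\<close>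
definition rec_block :: "'a::comm_ring_1 mat \<Rightarrow> nat \<Rightarrow> nat \<Rightarrow> 'a mat" where
  "rec_block M J j = (let C = dim_col M; R = dim_row M; U = R - (J + 1);
      b = 2 * J - 2 * j - 1; e = J - j - 1 in
    mat (b * U + (2 * J - j - 1)) (b * C) (\<lambda>(r, c).
      let s = c div C; cc = c mod C in
      if r < b * U then
        (if s = r div U then M $$ (r mod U, cc) else 0)
      else (let r' = r - b * U in
        if s < e then
          (if s \<le> r' \<and> r' - s \<le> J then M $$ (U + (r' - s), cc) else 0)
        else (let s' = s - e in
          if s' \<le> r' \<and> r' - s' < J then of_nat (J - (r' - s')) * M $$ (U + (r' - s'), cc)
          else 0))))"

text \<open>Recursive subresultant matrices Nbar^(k,j)(F,G); jj k = j_k. Level k = 0 is unused.\<close>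
fun rsm :: "'a::comm_ring_1 poly \<Rightarrow> 'a poly \<Rightarrow> (nat \<Rightarrow> nat) \<Rightarrow> nat \<Rightarrow> nat \<Rightarrow> 'a mat" where
  "rsm F G jj 0 j = zero_mat 0 0"
| "rsm F G jj (Suc 0) j = sres_mat (degree F) (degree G) F G j"
| "rsm F G jj (Suc (Suc k)) j = rec_block (rsm F G jj (Suc k) (jj (Suc k))) (jj (Suc k)) j"

text \<open>Nbar^(k,j)_tau: top D-1 rows and the (D+j-tau)-th row (1-based), D = number of columns.\<close>
definition rsm_tau :: "'a::comm_ring_1 poly \<Rightarrow> 'a poly \<Rightarrow> (nat \<Rightarrow> nat) \<Rightarrow> nat \<Rightarrow> nat \<Rightarrow> nat \<Rightarrow> 'a mat" where
  "rsm_tau F G jj k j \<tau> = (let M = rsm F G jj k j; D = dim_col M in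
     tau_sub M D (D + j - \<tau> - 1))"

definition is_PRS :: "'a::field_gcd poly \<Rightarrow> 'a poly \<Rightarrow> (nat \<Rightarrow> 'a poly) \<Rightarrow> nat \<Rightarrow> (nat \<Rightarrow> 'a) \<Rightarrow> (nat \<Rightarrow> 'a) \<Rightarrow> bool" where
  "is_PRS A B P l \<alpha> \<beta> \<longleftrightarrow>
     A \<noteq> 0 \<and> B \<noteq> 0 \<and> degree A > degree B \<and>
     2 \<le> l \<and> P 1 = A \<and> P 2 = B \<and>
     (\<forall>i\<in>{1..l}. P i \<noteq> 0) \<and>
     (\<forall>i\<in>{2..l}. degree (P (i - 1)) > degree (P i)) \<and>
     (\<forall>i\<in>{3..l}. \<alpha> i \<noteq> 0 \<and> \<beta> i \<noteq> 0 \<and>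
        (\<exists>q. smult (\<alpha> i) (P (i - 2)) = q * P (i - 1) + smult (\<beta> i) (P i))) \<and>
     (\<exists>\<gamma>. \<gamma> \<noteq> 0 \<and> P l = smult \<gamma> (gcd A B))"

definition is_complete_recursive_PRS ::
  "'a::field_gcd poly \<Rightarrow> 'a poly \<Rightarrow> nat \<Rightarrow> (nat \<Rightarrow> nat \<Rightarrow> 'a poly) \<Rightarrow> (nat \<Rightarrow> nat)
    \<Rightarrow> (nat \<Rightarrow> nat \<Rightarrow> 'a) \<Rightarrow> (nat \<Rightarrow> nat \<Rightarrow> 'a) \<Rightarrow> bool" where
  "is_complete_recursive_PRS F G t P l \<alpha> \<beta> \<longleftrightarrow>
     1 \<le> t \<and>
     (\<forall>k\<in>{1..t}. is_PRS (P k 1) (P k 2) (P k) (l k) (\<alpha> k) (\<beta> k)) \<and>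
     P 1 1 = F \<and> P 1 2 = G \<and>
     (\<forall>k\<in>{2..t}. P k 1 = P (k - 1) (l (k - 1)) \<and> P k 2 = pderiv (P k 1)) \<and>
     (\<forall>k\<in>{1..<t}. degree (P k (l k)) > 0) \<and>
     degree (P t (l t)) = 0"

text \<open>j_k = deg P^(k)_{l_k} for k \<ge> 1, j_0 = m = deg F.\<close>
definition jseq :: "'a::zero poly \<Rightarrow> (nat \<Rightarrow> nat \<Rightarrow> 'a poly) \<Rightarrow> (nat \<Rightarrow> nat) \<Rightarrow> nat \<Rightarrow> nat" where
  "jseq F P l k = (if k = 0 then degree F else degree (P k (l k)))"

definition Bconst :: "(nat \<Rightarrow> nat \<Rightarrow> 'a::field_gcd poly) \<Rightarrow> (nat \<Rightarrow> nat) \<Rightarrow> (nat \<Rightarrow> nat \<Rightarrow> 'a)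
    \<Rightarrow> (nat \<Rightarrow> nat \<Rightarrow> 'a) \<Rightarrow> nat \<Rightarrow> 'a" where
  "Bconst P l \<alpha> \<beta> k = (let n = (\<lambda>i. degree (P k i)); c = (\<lambda>i. lead_coeff (P k i));
      d = (\<lambda>i. n i - n (i + 1)); L = l k in
     c L ^ (d (L - 1) - 1) *
     (\<Prod>i\<in>{3..L}. (\<beta> k i / \<alpha> k i) ^ (n (i - 1) - n L) *
        c (i - 1) ^ (d (i - 2) + d (i - 1)) *
        (-1) ^ ((n (i - 2) - n L) * (n (i - 1) - n L))))"

definition bkj :: "'a::zero poly \<Rightarrow> (nat \<Rightarrow> nat \<Rightarrow> 'a poly) \<Rightarrow> (nat \<Rightarrow> nat) \<Rightarrow> nat \<Rightarrow> nat \<Rightarrow> nat" where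
  "bkj F P l k j = (if k = 1 then 1 else 2 * jseq F P l (k - 1) - 2 * j - 1)"

definition ukj :: "'a::zero poly \<Rightarrow> 'a poly \<Rightarrow> (nat \<Rightarrow> nat \<Rightarrow> 'a poly) \<Rightarrow> (nat \<Rightarrow> nat) \<Rightarrow> nat \<Rightarrow> nat \<Rightarrow> nat" where
  "ukj F G P l k j = (degree F + degree G - 2 * jseq F P l 1) *
     (\<Prod>i\<in>{2..k-1}. 2 * jseq F P l (i - 1) - 2 * jseq F P l i - 1) * bkj F P l k j"

definition uk :: "'a::zero poly \<Rightarrow> 'a poly \<Rightarrow> (nat \<Rightarrow> nat \<Rightarrow> 'a poly) \<Rightarrow> (nat \<Rightarrow> nat) \<Rightarrow> nat \<Rightarrow> nat" where
  "uk F G P l k = (if k = 1 then degree F + degree G - 2 * jseq F P l 1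
                   else ukj F G P l k (jseq F P l k))"

definition rkj :: "'a::field_gcd poly \<Rightarrow> 'a poly \<Rightarrow> (nat \<Rightarrow> nat \<Rightarrow> 'a poly) \<Rightarrow> (nat \<Rightarrow> nat) \<Rightarrow> nat \<Rightarrow> nat \<Rightarrow> 'a" where
  "rkj F G P l k j = (if k = 1 then 1 else
     (-1) ^ ((uk F G P l (k - 1) - 1) * (\<Sum>i\<in>{1..<bkj F P l k j}. i)))"

fun Rbar :: "'a::field_gcd poly \<Rightarrow> 'a poly \<Rightarrow> (nat \<Rightarrow> nat \<Rightarrow> 'a poly) \<Rightarrow> (nat \<Rightarrow> nat)
    \<Rightarrow> (nat \<Rightarrow> nat \<Rightarrow> 'a) \<Rightarrow> (nat \<Rightarrow> nat \<Rightarrow> 'a) \<Rightarrow> nat \<Rightarrow> 'a" where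
  "Rbar F G P l \<alpha> \<beta> 0 = 1"
| "Rbar F G P l \<alpha> \<beta> (Suc k) =
     Rbar F G P l \<alpha> \<beta> k ^ bkj F P l (Suc k) (jseq F P l (Suc k)) *
     rkj F G P l (Suc k) (jseq F P l (Suc k)) * Bconst P l \<alpha> \<beta> (Suc k)"

end

theory Submission
  imports Defs "Subresultants.Subresultant"
begin


lemma minus_one_pow_eq: "even (x + y) \<Longrightarrow> (-1::'a::comm_ring_1)^x = (-1)^y"
  by (metis minus_one_power_iff even_add)

lemma sum_Suc_range: "(\<Sum>i\<in>{1..<Suc b}. i) = (\<Sum>i\<in>{1..<b}. i) + (b::nat)"
  by (cases b) auto

lemma lessThan_add_split: "{..<a+m::nat} = {..<a} \<union> (\<lambda>i. a+i) ` {..<m}"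
proof -
  have "x \<in> (\<lambda>i. a+i) ` {..<m}" if "x < a + m" "\<not> x < a" for x
    by (rule image_eqI[of _ _ "x-a"], insert that, auto)
  thus ?thesis by auto
qed

lemma G_det:
  fixes G :: "'a::idom mat"
  assumes C: "C \<ge> 1"
  shows "G \<in> carrier_mat (b*C) (b*C) \<Longrightarrow>
    (\<forall>r c. r < b*(C-1) \<longrightarrow> c < b*C \<longrightarrow> G $$ (r,c) = (if c = (r div (C-1))*C + r mod (C-1) then d else 0)) \<Longrightarrow>
    det G = (-1)^((C-1) * (\<Sum>i\<in>{1..<b}. i)) * d^(b*(C-1)) *
      det (mat b b (\<lambda>(i,t). G $$ (b*(C-1)+i, t*C + (C-1))))"
proof (induction b arbitrary: G)
  case 0
  then show ?case by simp
next
  case (Suc b G)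
  define U where "U = C - 1"
  have CU: "C = U + 1" using C U_def by auto
  define n' where "n' = Suc b * C"
  define j0 where "j0 = b * C + U"
  have n'j0: "n' = Suc j0" unfolding n'_def j0_def CU by simp
  have GC: "G \<in> carrier_mat n' n'" using Suc.prems n'_def by auto
  have Gtop: "\<And>r c. r < Suc b * U \<Longrightarrow> c < n' \<Longrightarrow> G $$ (r,c) = (if c = (r div U)*C + r mod U then d else 0)"
    using Suc.prems(2) unfolding U_def n'_def by auto
  define \<mu> where "\<mu> = mat (Suc b) (Suc b) (\<lambda>(i,t). G $$ (Suc b * U + i, t*C + U))"
  have lap: "det G = (\<Sum>i<n'. G $$ (i,j0) * cofactor G i j0)"
    by (rule laplace_expansion_column[OF GC], simp add: n'j0)
  have split: "{..<n'} = {..<Suc b * U} \<union> (\<lambda>i. Suc b * U + i) ` {..<Suc b}"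
    unfolding n'_def CU lessThan_add_split[symmetric] by (simp add: algebra_simps)
  have zero: "G $$ (i,j0) = 0" if "i < Suc b * U" for i
  proof -
    have "i div U < Suc b" using that less_mult_imp_div_less by blast
    hence "i div U \<le> b" by auto
    moreover have "i mod U < U" using that by (cases "U = 0") auto
    ultimately have "(i div U)*C + i mod U < j0" unfolding j0_def CU
      by (intro add_le_less_mono mult_le_mono1)
    thus ?thesis using Gtop[OF that] n'j0 by auto
  qed
  have "det G = (\<Sum>i<Suc b. G $$ (Suc b * U + i,j0) * cofactor G (Suc b * U + i) j0)"
    unfolding lap split
    by (subst sum.union_disjoint, auto simp: zero sum.reindex inj_on_def)
  also have "\<dots> = (\<Sum>i<Suc b. \<mu> $$ (i,b) * ((-1)^(i+b) * det (mat_delete \<mu> i b)) *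
      ((-1)^(U * (\<Sum>i\<in>{1..<Suc b}. i)) * d^(Suc b*U)))"
  proof (rule sum.cong[OF refl])
    fix i assume i: "i \<in> {..<Suc b}"
    hence i: "i < Suc b" by auto
    define Gd where "Gd = mat_delete G (Suc b * U + i) j0"
    have GdC: "Gd \<in> carrier_mat (b*U + U + b) (b*U + U + b)"
      unfolding Gd_def using GC n'j0 unfolding j0_def CU by (auto simp: mat_delete_def)
    have swap: "det Gd = (-1)^(U*b) * det (mat (b*U + U + b) (b*U + U + b) (\<lambda>(r, c). Gd $$
       (if r < b*U then r else if r < b*U + b then r + U else r - b, c)))"
      by (rule det_swap_final_rows[OF GdC], simp)
    define A1 where "A1 = mat (b*C) (b*C) (\<lambda>(r,c). Gd $$ (if r < b*U then r else r + U, c))"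
    define A2 where "A2 = mat (b*C) U (\<lambda>(r,c). Gd $$ (if r < b*U then r else r + U, c + b*C))"
    have four: "mat (b*U + U + b) (b*U + U + b) (\<lambda>(r, c). Gd $$
       (if r < b*U then r else if r < b*U + b then r + U else r - b, c))
       = four_block_mat A1 A2 (0\<^sub>m U (b*C)) (d \<cdot>\<^sub>m 1\<^sub>m U)"
    proof (rule eq_matI)
      fix r c assume r: "r < dim_row (four_block_mat A1 A2 (0\<^sub>m U (b*C)) (d \<cdot>\<^sub>m 1\<^sub>m U))"
        and c: "c < dim_col (four_block_mat A1 A2 (0\<^sub>m U (b*C)) (d \<cdot>\<^sub>m 1\<^sub>m U))"
      have r: "r < b*U + U + b" and c: "c < b*U + U + b" using r c unfolding A1_def CU by auto
      show "mat (b*U + U + b) (b*U + U + b) (\<lambda>(r, c). Gd $$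
       (if r < b*U then r else if r < b*U + b then r + U else r - b, c)) $$ (r,c) =
        four_block_mat A1 A2 (0\<^sub>m U (b*C)) (d \<cdot>\<^sub>m 1\<^sub>m U) $$ (r,c)"
      proof (cases "r < b*C")
        case True
        have fb: "four_block_mat A1 A2 (0\<^sub>m U (b*C)) (d \<cdot>\<^sub>m 1\<^sub>m U) $$ (r,c) =
          (if c < b*C then A1 $$ (r,c) else A2 $$ (r, c - b*C))"
          by (subst index_mat_four_block, insert r c True, auto simp: A1_def A2_def CU)
        show ?thesis unfolding fb using r c True unfolding A1_def A2_def CU by auto
      next
        case False
        define r' where "r' = r - b*C"
        have r': "r' < U" "r = b*C + r'" using False r unfolding r'_def CU by auto
        have rr: "r - b = b*U + r'" using r'(2) unfolding CU by simp
        have "Gd $$ (r - b, c) = G $$ (b*U + r', if c < j0 then c else Suc c)"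
          unfolding Gd_def mat_delete_def rr using r c GC r' unfolding n'_def j0_def CU
          by (auto simp: algebra_simps)
        also have "\<dots> = (if c = r' + b*C then d else 0)"
        proof -
          have lt: "b*U + r' < Suc b * U" using r' by simp
          have dv: "(b*U + r') div U = b" "(b*U + r') mod U = r'" using r' by auto
          have cl: "(if c < j0 then c else Suc c) < n'" using c n'j0 unfolding j0_def CU by auto
          show ?thesis unfolding Gtop[OF lt cl] dv using c r' unfolding j0_def CU
            by (auto simp: algebra_simps)
        qed
        moreover have "four_block_mat A1 A2 (0\<^sub>m U (b*C)) (d \<cdot>\<^sub>m 1\<^sub>m U) $$ (r,c) =
          (if c < b*C then 0 else (d \<cdot>\<^sub>m 1\<^sub>m U) $$ (r', c - b*C))"
          by (subst index_mat_four_block, insert r c False r', auto simp: A1_def A2_def CU)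
        moreover have "(r < b*U + b) \<longleftrightarrow> False" "\<not> r < b * U" using r' unfolding CU by auto
        ultimately show ?thesis using False r c r' unfolding CU
          by (auto simp: algebra_simps)
      qed
    qed (auto simp: A1_def A2_def CU)
    have detGd: "det Gd = (-1)^(U*b) * (det A1 * d^U)"
      unfolding swap four
      by (subst det_four_block_mat_lower_left_zero[of _ "b*C" _ U], auto simp: A1_def A2_def)
    have A1C: "A1 \<in> carrier_mat (b*C) (b*C)" unfolding A1_def by auto
    have A1top: "\<forall>r c. r < b*(C-1) \<longrightarrow> c < b*C \<longrightarrow> A1 $$ (r,c) = (if c = (r div (C-1))*C + r mod (C-1) then d else 0)"
    proof (intro allI impI)
      fix r c assume r: "r < b*(C-1)" and c: "c < b*C"
      have "A1 $$ (r,c) = G $$ (r,c)"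
        unfolding A1_def Gd_def mat_delete_def using r c GC unfolding n'_def j0_def CU by auto
      also have "\<dots> = (if c = (r div (C-1))*C + r mod (C-1) then d else 0)"
        using Gtop[of r c] r c unfolding n'_def U_def by auto
      finally show "A1 $$ (r,c) = (if c = (r div (C-1))*C + r mod (C-1) then d else 0)" .
    qed
    have IH: "det A1 = (-1)^((C-1) * (\<Sum>i\<in>{1..<b}. i)) * d^(b*(C-1)) *
      det (mat b b (\<lambda>(i,t). A1 $$ (b*(C-1)+i, t*C + (C-1))))"
      by (rule Suc.IH[OF A1C A1top])
    have md: "mat b b (\<lambda>(i',t). A1 $$ (b*(C-1)+i', t*C + (C-1))) = mat_delete \<mu> i b"
    proof (rule eq_matI)
      fix i' t assume "i' < dim_row (mat_delete \<mu> i b)" "t < dim_col (mat_delete \<mu> i b)"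
      hence it: "i' < b" "t < b" unfolding \<mu>_def by auto
      have tc1: "t*C + U < Suc t * C" unfolding CU by simp
      have tc2: "Suc t * C \<le> b * C" using it(2) by (intro mult_le_mono1) simp
      have tc: "t*C + U < b*C" using tc1 tc2 by linarith
      have b1: "b*U + i' < b*C" using it unfolding CU by simp
      have b2: "b*U + i' + U < n' - 1" "t*C + U < n' - 1" using it tc unfolding n'_def CU by simp_all
      have e1: "A1 $$ (b*U+i', t*C+U) = Gd $$ (b*U+i'+U, t*C+U)"
        unfolding A1_def using b1 tc by simp
      have e2: "Gd $$ (b*U+i'+U, t*C+U) = G $$ (if b*U+i'+U < Suc b * U + i then b*U+i'+U else Suc (b*U+i'+U), t*C+U)"
      proof -
        have "t*C+U < j0" using tc unfolding j0_def by linarith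
        thus ?thesis unfolding Gd_def mat_delete_def using b2 GC by simp
      qed
      have e3: "mat_delete \<mu> i b $$ (i',t) = G $$ (Suc b * U + (if i' < i then i' else Suc i'), t*C+U)"
        unfolding mat_delete_def \<mu>_def using it by auto
      show "mat b b (\<lambda>(i',t). A1 $$ (b*(C-1)+i', t*C + (C-1))) $$ (i',t) = mat_delete \<mu> i b $$ (i',t)"
        unfolding U_def[symmetric] using it e1 e2 e3 by (auto simp: algebra_simps)
    qed (auto simp: \<mu>_def)
    have mu: "\<mu> $$ (i,b) = G $$ (Suc b * U + i, j0)" unfolding \<mu>_def j0_def using i by auto
    have sgn: "(-1::'a)^(Suc b * U + i + j0) * (-1)^(U*b) * (-1)^(U * (\<Sum>i\<in>{1..<b}. i))
       = (-1)^(i+b) * (-1)^(U * (\<Sum>i\<in>{1..<Suc b}. i))"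
    proof -
      have "(-1::'a)^(Suc b * U + i + j0) * (-1)^(U*b) * (-1)^(U * (\<Sum>i\<in>{1..<b}. i))
        = (-1)^(Suc b * U + i + j0 + U*b + U * (\<Sum>i\<in>{1..<b}. i))" by (simp add: power_add)
      also have "\<dots> = (-1)^(i + b + U * (\<Sum>i\<in>{1..<Suc b}. i))"
      proof (rule minus_one_pow_eq)
        have eq: "Suc b * U + i + j0 + U*b + U * (\<Sum>i\<in>{1..<b}. i) + (i + b + U * (\<Sum>i\<in>{1..<Suc b}. i))
          = 2 * (i + b + U * (\<Sum>i\<in>{1..<b}. i) + U + 2 * U * b)"
          unfolding sum_Suc_range j0_def CU by (simp add: algebra_simps)
        show "even (Suc b * U + i + j0 + U*b + U * (\<Sum>i\<in>{1..<b}. i) + (i + b + U * (\<Sum>i\<in>{1..<Suc b}. i)))"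
          unfolding eq by (rule even_mult_iff[THEN iffD2], simp)
      qed
      finally show ?thesis by (simp add: power_add)
    qed
    have "G $$ (Suc b * U + i,j0) * cofactor G (Suc b * U + i) j0
      = \<mu> $$ (i,b) * ((-1)^(Suc b * U + i + j0) * ((-1)^(U*b) * (
        (-1)^(U * (\<Sum>i\<in>{1..<b}. i)) * d^(b*U) * det (mat_delete \<mu> i b) * d^U)))"
      unfolding cofactor_def Gd_def[symmetric] detGd IH md[unfolded U_def[symmetric]] mu U_def[symmetric] by simp
    also have "\<dots> = \<mu> $$ (i,b) * ((-1)^(i+b) * det (mat_delete \<mu> i b)) *
      ((-1)^(U * (\<Sum>i\<in>{1..<Suc b}. i)) * d^(Suc b*U))"
      using sgn[symmetric] by (simp add: algebra_simps power_add)
    finally show "G $$ (Suc b * U + i,j0) * cofactor G (Suc b * U + i) j0 = \<dots>" .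
  qed
  also have "\<dots> = (-1)^(U * (\<Sum>i\<in>{1..<Suc b}. i)) * d^(Suc b*U) * det \<mu>"
    by (subst laplace_expansion_column[of \<mu> "Suc b" b], auto simp: \<mu>_def sum_distrib_left sum_distrib_right
      cofactor_def algebra_simps)
  finally show ?case unfolding \<mu>_def U_def by simp
qed

definition bd :: "nat \<Rightarrow> nat \<Rightarrow> 'a::zero mat \<Rightarrow> 'a mat" where
  "bd C b A = mat (b*C) (b*C) (\<lambda>(r,c). if r div C = c div C then A $$ (r mod C, c mod C) else 0)"

lemma bd_det: fixes A :: "'a::idom mat"
  assumes A: "A \<in> carrier_mat C C" and C: "C > 0"
  shows "det (bd C b A) = det A ^ b"
proof (induction b)
  case 0
  then show ?case by (simp add: bd_def)
next
  case (Suc b)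
  have "bd C (Suc b) A = four_block_mat A (0\<^sub>m C (b*C)) (0\<^sub>m (b*C) C) (bd C b A)"
  proof (rule eq_matI)
    fix r c assume r: "r < dim_row (four_block_mat A (0\<^sub>m C (b*C)) (0\<^sub>m (b*C) C) (bd C b A))"
      and c: "c < dim_col (four_block_mat A (0\<^sub>m C (b*C)) (0\<^sub>m (b*C) C) (bd C b A))"
    have r: "r < C + b*C" and c: "c < C + b*C" using r c A by (auto simp: bd_def)
    have fb: "four_block_mat A (0\<^sub>m C (b*C)) (0\<^sub>m (b*C) C) (bd C b A) $$ (r,c) =
      (if r < C then if c < C then A $$ (r,c) else 0 else if c < C then 0 else bd C b A $$ (r - C, c - C))"
      by (subst index_mat_four_block, insert r c A, auto simp: bd_def)
    show "bd C (Suc b) A $$ (r,c) = four_block_mat A (0\<^sub>m C (b*C)) (0\<^sub>m (b*C) C) (bd C b A) $$ (r,c)"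
    proof (cases "r < C")
      case rC: True
      show ?thesis
      proof (cases "c < C")
        case True
        then show ?thesis unfolding fb using rC r c by (simp add: bd_def)
      next
        case False
        have "c div C \<noteq> 0" using False C by (simp add: div_eq_0_iff)
        then show ?thesis unfolding fb using rC r c False by (simp add: bd_def)
      qed
    next
      case rC: False
      show ?thesis
      proof (cases "c < C")
        case True
        have "r div C \<noteq> 0" using rC C by (simp add: div_eq_0_iff)
        then show ?thesis unfolding fb using rC r c True by (simp add: bd_def)
      next
        case False
        have "r div C = Suc ((r - C) div C)" "c div C = Suc ((c - C) div C)"
          "r mod C = (r - C) mod C" "c mod C = (c - C) mod C"
          using rC False C by (auto simp: le_div_geq le_mod_geq)
        then show ?thesis unfolding fb using rC r c False by (simp add: bd_def)
      qed
    qed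
  qed (insert A, auto simp: bd_def)
  then show ?case using Suc.IH
    by (simp add: det_four_block_mat_upper_right_zero[OF A _ _ _, of _ "b*C"] bd_def)
qed

lemma sum_block: fixes g :: "nat \<Rightarrow> 'a::comm_monoid_add" and t :: nat
  assumes C: "C > 0" and t: "t < b"
  shows "(\<Sum>k\<in>{0..<b*C}. if k div C = t then g k else 0) = (\<Sum>k'<C. g (t*C+k'))"
proof -
  have "(\<Sum>k\<in>{0..<b*C}. if k div C = t then g k else 0) = (\<Sum>k\<in>{k\<in>{0..<b*C}. k div C = t}. g k)"
    by (rule sum.inter_filter[symmetric], simp)
  also have "{k\<in>{0..<b*C}. k div C = t} = {0..<b*C} \<inter> {k. k div C = t}" by auto
  also have "{0..<b*C} \<inter> {k. k div C = t} = (\<lambda>k'. t*C+k') ` {..<C}"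
  proof
    show "{0..<b*C} \<inter> {k. k div C = t} \<subseteq> (\<lambda>k'. t*C+k') ` {..<C}"
    proof
      fix k assume "k \<in> {0..<b*C} \<inter> {k. k div C = t}"
      hence "k div C = t" by auto
      hence "k = t*C + k mod C" by (metis div_mult_mod_eq)
      thus "k \<in> (\<lambda>k'. t*C+k') ` {..<C}" using C by (intro image_eqI[of _ _ "k mod C"], auto)
    qed
    show "(\<lambda>k'. t*C+k') ` {..<C} \<subseteq> {0..<b*C} \<inter> {k. k div C = t}"
    proof
      fix k assume "k \<in> (\<lambda>k'. t*C+k') ` {..<C}"
      then obtain k' where k: "k = t*C+k'" "k' < C" by auto
      have "t*C + k' < Suc t * C" using k by simp
      also have "\<dots> \<le> b * C" using t by (intro mult_le_mono1) simp
      finally show "k \<in> {0..<b*C} \<inter> {k. k div C = t}" using k C by simp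
    qed
  qed
  also have "(\<Sum>k\<in>(\<lambda>k'. t*C+k') ` {..<C}. g k) = (\<Sum>k'<C. g (t*C+k'))"
    by (subst sum.reindex, auto simp: inj_on_def)
  finally show ?thesis .
qed

lemma block_aux: fixes t C k b :: nat assumes C: "C > 0" and t: "t < b" and k: "k < C"
  shows "t*C + k < b*C" "(t*C+k) div C = t" "(t*C+k) mod C = k"
proof -
  have "t*C + k < Suc t * C" using k by simp
  also have "\<dots> \<le> b * C" using t by (intro mult_le_mono1) simp
  finally show "t*C + k < b*C" .
qed (insert C k, auto)

lemma mult_bd: fixes X :: "'a::comm_ring_1 mat"
  assumes X: "X \<in> carrier_mat (b*C) (b*C)" and C: "C > 0" and r: "r < b*C" and c: "c < b*C"
  shows "(X * bd C b W) $$ (r,c) = (\<Sum>k<C. X $$ (r, (c div C)*C + k) * W $$ (k, c mod C))"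
proof -
  have t: "c div C < b" using c C by (simp add: div_less_iff_less_mult)
  have "(X * bd C b W) $$ (r,c) = (\<Sum>k\<in>{0..<b*C}. X $$ (r,k) * bd C b W $$ (k,c))"
    using X r c by (simp add: bd_def scalar_prod_def)
  also have "\<dots> = (\<Sum>k\<in>{0..<b*C}. if k div C = c div C then X $$ (r,k) * W $$ (k mod C, c mod C) else 0)"
    by (rule sum.cong, insert c, auto simp: bd_def)
  also have "\<dots> = (\<Sum>k'<C. X $$ (r, (c div C)*C + k') * W $$ (((c div C)*C + k') mod C, c mod C))"
    by (rule sum_block[OF C t])
  also have "\<dots> = (\<Sum>k<C. X $$ (r, (c div C)*C + k) * W $$ (k, c mod C))"
    by (rule sum.cong, auto simp: block_aux[OF C t])
  finally show ?thesis .
qed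

lemma div_mod_iff: fixes C m c s :: nat assumes "C > 0" "m < C"
  shows "(c div C = s \<and> m = c mod C) = (c = s*C + m)"
proof
  assume "c div C = s \<and> m = c mod C"
  thus "c = s*C + m" by (metis div_mult_mod_eq)
next
  assume "c = s*C + m"
  thus "c div C = s \<and> m = c mod C" using assms by simp
qed

lemma block_det:
  fixes X Y :: "'a::field mat"
  assumes C: "C \<ge> 1" and Y: "Y \<in> carrier_mat C C" and dY: "det Y \<noteq> 0"
  and X: "X \<in> carrier_mat (b*C) (b*C)"
  and top: "\<And>r c. r < b*(C-1) \<Longrightarrow> c < b*C \<Longrightarrow> X $$ (r,c) = (if c div C = r div (C-1) then Y $$ (r mod (C-1), c mod C) else 0)"
  shows "det X = (-1)^((C-1) * (\<Sum>i\<in>{1..<b}. i)) *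
    det (mat b b (\<lambda>(i,t). \<Sum>c<C. X $$ (b*(C-1)+i, t*C + c) * cofactor Y (C-1) c))"
proof -
  have C0: "C > 0" using C by simp
  define W where "W = adj_mat Y"
  have W: "W \<in> carrier_mat C C" "Y * W = det Y \<cdot>\<^sub>m 1\<^sub>m C" using adj_mat[OF Y] W_def by auto
  have "det Y * det W = det Y ^ C"
    using arg_cong[OF W(2), of det] det_mult[OF Y W(1)] by simp
  moreover obtain C' where C': "C = Suc C'" using C by (cases C, auto)
  ultimately have "det Y * det W = det Y * det Y ^ (C - 1)" by simp
  hence detW: "det W = det Y ^ (C - 1)" using dY by simp
  define Z where "Z = X * bd C b W"
  have bdC: "bd C b W \<in> carrier_mat (b*C) (b*C)" by (simp add: bd_def)
  have ZC: "Z \<in> carrier_mat (b*C) (b*C)" using X bdC Z_def by auto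
  have detZ: "det Z = det X * det Y ^ ((C-1)*b)"
    unfolding Z_def det_mult[OF X bdC] bd_det[OF W(1) C0] detW by (simp add: power_mult)
  have Ztop: "\<forall>r c. r < b*(C-1) \<longrightarrow> c < b*C \<longrightarrow> Z $$ (r,c) = (if c = (r div (C-1))*C + r mod (C-1) then det Y else 0)"
  proof (intro allI impI)
    fix r c assume r: "r < b*(C-1)" and c: "c < b*C"
    have rb: "r < b*C" using r by (meson diff_le_self less_le_trans mult_le_mono2)
    have t: "c div C < b" using c C0 by (simp add: div_less_iff_less_mult)
    have C1: "C - 1 > 0" using r by (cases "C - 1", auto)
    have rm: "r mod (C-1) < C" using C1 by (meson diff_le_self mod_less_divisor order_less_le_trans)
    have "Z $$ (r,c) = (\<Sum>k<C. X $$ (r, (c div C)*C + k) * W $$ (k, c mod C))"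
      unfolding Z_def by (rule mult_bd[OF X C0 rb c])
    also have "\<dots> = (\<Sum>k<C. (if c div C = r div (C-1) then Y $$ (r mod (C-1), k) else 0) * W $$ (k, c mod C))"
      by (rule sum.cong[OF refl], subst top[OF r], auto simp: block_aux[OF C0 t])
    also have "\<dots> = (if c div C = r div (C-1) then (Y * W) $$ (r mod (C-1), c mod C) else 0)"
      using Y W(1) rm C0 by (auto simp: scalar_prod_def intro!: sum.cong)
    also have "\<dots> = (if c div C = r div (C-1) \<and> r mod (C-1) = c mod C then det Y else 0)"
      unfolding W(2) using rm C0 by auto
    also have "(c div C = r div (C-1) \<and> r mod (C-1) = c mod C) = (c = (r div (C-1))*C + r mod (C-1))"
      by (rule div_mod_iff[OF C0 rm])
    finally show "Z $$ (r,c) = (if c = (r div (C-1))*C + r mod (C-1) then det Y else 0)" .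
  qed
  have G: "det Z = (-1)^((C-1) * (\<Sum>i\<in>{1..<b}. i)) * det Y^(b*(C-1)) *
      det (mat b b (\<lambda>(i,t). Z $$ (b*(C-1)+i, t*C + (C-1))))"
    by (rule G_det[OF C ZC Ztop])
  have mat_eq: "mat b b (\<lambda>(i,t). Z $$ (b*(C-1)+i, t*C + (C-1))) =
     mat b b (\<lambda>(i,t). \<Sum>c<C. X $$ (b*(C-1)+i, t*C + c) * cofactor Y (C-1) c)"
  proof (rule eq_matI)
    fix i t assume "i < dim_row (mat b b (\<lambda>(i,t). \<Sum>c<C. X $$ (b*(C-1)+i, t*C + c) * cofactor Y (C-1) c))"
      "t < dim_col (mat b b (\<lambda>(i,t). \<Sum>c<C. X $$ (b*(C-1)+i, t*C + c) * cofactor Y (C-1) c))"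
    hence it: "i < b" "t < b" by auto
    have "b*(C-1) + b = b*C" using C by (cases C) (auto simp: algebra_simps)
    hence ri: "b*(C-1)+i < b*C" using it by linarith
    have ct: "t*C + (C-1) < b*C" "(t*C + (C-1)) div C = t" "(t*C + (C-1)) mod C = C - 1"
      using block_aux[OF C0 it(2), of "C-1"] C by auto
    have "Z $$ (b*(C-1)+i, t*C + (C-1)) = (\<Sum>k<C. X $$ (b*(C-1)+i, t*C + k) * W $$ (k, C-1))"
      unfolding Z_def mult_bd[OF X C0 ri ct(1)] ct(2,3) ..
    also have "\<dots> = (\<Sum>c<C. X $$ (b*(C-1)+i, t*C + c) * cofactor Y (C-1) c)"
      by (rule sum.cong, insert Y C, auto simp: W_def adj_mat_def)
    finally show "mat b b (\<lambda>(i,t). Z $$ (b*(C-1)+i, t*C + (C-1))) $$ (i,t) =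
      mat b b (\<lambda>(i,t). \<Sum>c<C. X $$ (b*(C-1)+i, t*C + c) * cofactor Y (C-1) c) $$ (i,t)"
      using it by simp
  qed auto
  from detZ G[unfolded mat_eq] dY show ?thesis by (simp add: mult.commute)
qed




lemma coeff_int_helper: fixes A :: "'a::zero poly"
  assumes "degree A = p"
  shows "coeff_int A (int p - int i + int j) = (if j \<le> i \<and> i - j \<le> p then coeff A (p - (i - j)) else 0)"
proof (cases "j \<le> i")
  case True
  show ?thesis
  proof (cases "i - j \<le> p")
    case True2: True
    have eq: "nat (int p - int i + int j) = p - (i - j)" "\<not> (int p - int i + int j < 0)" using True True2 by auto
    show ?thesis using True True2 eq unfolding coeff_int_def by presburger
  next
    case False
    have "int p - int i + int j < 0" using False True by simp
    then show ?thesis using True False unfolding coeff_int_def by simp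
  qed
next
  case False
  have "coeff A (nat (int p - int i + int j)) = 0" using False assms by (intro coeff_eq_0) simp
  then show ?thesis using False unfolding coeff_int_def by simp
qed

lemma sres_tau_subresultant'_mat:
  fixes A B :: "'a::comm_ring_1 poly"
  assumes J: "J < degree B" and BA: "degree B \<le> degree A" and tau: "\<tau> \<le> J"
  shows "sres_tau A B J \<tau> = subresultant'_mat J \<tau> A B"
proof -
  define p where "p = degree A"
  define q where "q = degree B"
  have Jq: "J < q" and qp: "q \<le> p" using J BA p_def q_def by auto
  define n where "n = p + q - 2*J"
  have n: "n = (p - J) + (q - J)" using Jq qp n_def by simp
  define ri where "ri = p + q - J - \<tau> - 1"
  have ri: "ri < p + q - J" "n - 1 < p + q - J" using Jq qp tau unfolding ri_def n_def by auto
  show ?thesis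
  proof (rule eq_matI)
    fix i j assume "i < dim_row (subresultant'_mat J \<tau> A B)" "j < dim_col (subresultant'_mat J \<tau> A B)"
    hence i: "i < n" and j: "j < n" unfolding subresultant'_mat_def Let_def n p_def q_def by auto
    have lhs: "sres_tau A B J \<tau> $$ (i,j) = sres_mat p q A B J $$ (if i < n - 1 then i else ri, j)"
      unfolding sres_tau_def Let_def tau_sub_def p_def[symmetric] q_def[symmetric] n_def[symmetric]
        ri_def[symmetric] using i j by simp
    have rhs: "subresultant'_mat J \<tau> A B $$ (i,j) = (if j < q - J
           then if i = n - 1 then coeff_int A (int \<tau> - int (q - J - 1) + int j)
                else coeff_int A (int p - int i + int j)
           else if i = n - 1 then coeff_int B (int \<tau> - int (p - J - 1) + int (j - (q - J)))
                   else coeff_int B (int q - int i + int (j - (q - J))))"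
      unfolding subresultant'_mat_def Let_def p_def[symmetric] q_def[symmetric] n[symmetric] using i j by simp
    have e1: "int \<tau> - int (q - J - 1) + int j = int p - int ri + int j"
      and e2: "int \<tau> - int (p - J - 1) + int jj = int q - int ri + int jj" for jj
      using Jq qp tau unfolding ri_def by auto
    have sm: "sres_mat p q A B J $$ (r, j) = (if j < q - J then (if j \<le> r \<and> r - j \<le> p then coeff A (p - (r - j)) else 0)
     else (if j - (q - J) \<le> r \<and> r - (j - (q - J)) \<le> q then coeff B (q - (r - (j - (q - J)))) else 0))"
      if "r < p + q - J" for r
      unfolding sres_mat_def using that j n_def by (simp add: Let_def)
    show "sres_tau A B J \<tau> $$ (i,j) = subresultant'_mat J \<tau> A B $$ (i,j)"
    proof (cases "i = n - 1")
      case True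
      show ?thesis unfolding lhs rhs
      using True sm[of ri] ri coeff_int_helper[OF p_def[symmetric]] coeff_int_helper[OF q_def[symmetric]]
      unfolding e1 e2 by (auto simp del: of_nat_diff)
    next
      case False
      hence ii: "i < n - 1" using i by auto
      have ii2: "i < p + q - J" using ii ri by auto
      show ?thesis unfolding lhs rhs
      using False ii sm[OF ii2] coeff_int_helper[OF p_def[symmetric]] coeff_int_helper[OF q_def[symmetric]]
      by (auto simp del: of_nat_diff)
    qed
  qed (insert Jq qp, auto simp: sres_tau_def subresultant'_mat_def Let_def tau_sub_def n_def p_def q_def)
qed

lemma det_sres_tau: fixes A B :: "'a::comm_ring_1 poly"
  assumes J: "J < degree B" and BA: "degree B \<le> degree A" and tau: "\<tau> \<le> J"
  shows "det (sres_tau A B J \<tau>) = coeff (subresultant J A B) \<tau>"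
  unfolding coeff_subresultant sres_tau_subresultant'_mat[OF assms] using J by simp




lemma smult_cancel_eq: fixes x y :: "'a::field"
  assumes "smult x P = smult y R" "x \<noteq> 0"
  shows "P = smult (y / x) R"
proof -
  have "P = smult (1/x) (smult x P)" using assms(2) by simp
  also have "\<dots> = smult (y/x) R" unfolding assms(1) by simp
  finally show ?thesis .
qed

lemma prs_step:
  fixes Q0 Q1 Q2 q :: "'a::field poly"
  assumes rel: "smult a1 Q0 = q * Q1 + smult b1 Q2" and a1: "a1 \<noteq> 0" and b1: "b1 \<noteq> 0"
    and Q2: "Q2 \<noteq> 0" and d01: "degree Q1 < degree Q0" and d12: "degree Q2 < degree Q1"
    and J: "J < degree Q2"
  shows "subresultant J Q0 Q1 = smult ((b1/a1)^(degree Q1 - J) * lead_coeff Q1^(degree Q0 - degree Q2)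
     * (-1)^((degree Q0 - J)*(degree Q1 - J))) (subresultant J Q1 Q2)"
proof -
  have FGH: "smult a1 Q0 + (-q) * Q1 = smult b1 Q2" using rel by simp
  have dF: "degree (smult a1 Q0) = degree Q0" using a1 by simp
  have dH: "degree (smult b1 Q2) = degree Q2" using b1 by simp
  from BT_lemma_1_12[OF FGH, unfolded dF dH] d01 d12 J
  have "subresultant J (smult a1 Q0) Q1 = smult ((-1)^((degree Q0 - J)*(degree Q1 - J)) *
     lead_coeff Q1^(degree Q0 - degree Q2)) (subresultant J Q1 (smult b1 Q2))" by auto
  hence "smult (a1^(degree Q1 - J)) (subresultant J Q0 Q1) = smult ((-1)^((degree Q0 - J)*(degree Q1 - J)) *
     lead_coeff Q1^(degree Q0 - degree Q2) * b1^(degree Q1 - J)) (subresultant J Q1 Q2)"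
    unfolding subresultant_smult_left[OF a1] subresultant_smult_right[OF b1] by simp
  from smult_cancel_eq[OF this] a1
  show ?thesis by (simp add: power_divide field_simps)
qed

lemma prs_step_last:
  fixes Q0 Q1 Q2 q :: "'a::field poly"
  assumes rel: "smult a1 Q0 = q * Q1 + smult b1 Q2" and a1: "a1 \<noteq> 0" and b1: "b1 \<noteq> 0"
    and Q2: "Q2 \<noteq> 0" and d01: "degree Q1 < degree Q0" and d12: "degree Q2 < degree Q1"
  shows "subresultant (degree Q2) Q0 Q1 = smult ((b1/a1)^(degree Q1 - degree Q2) * lead_coeff Q1^(degree Q0 - degree Q2)
     * (-1)^((degree Q0 - degree Q2)*(degree Q1 - degree Q2)) * lead_coeff Q2 ^ (degree Q1 - degree Q2 - 1)) Q2"
proof -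
  have FGH: "smult a1 Q0 + (-q) * Q1 = smult b1 Q2" using rel by simp
  have dF: "degree (smult a1 Q0) = degree Q0" using a1 by simp
  have dH: "degree (smult b1 Q2) = degree Q2" using b1 by simp
  define e where "e = degree Q1 - degree Q2"
  have e: "e = Suc (e - 1)" using d12 e_def by simp
  from BT_lemma_1_13[OF FGH, unfolded dF dH] d01 d12
  have "subresultant (degree Q2) (smult a1 Q0) Q1 = smult ((-1)^((degree Q0 - degree Q2)*(degree Q1 - degree Q2)) *
     lead_coeff Q1^(degree Q0 - degree Q2) * (b1 * lead_coeff Q2)^(degree Q1 - degree Q2 - 1)) (smult b1 Q2)" by auto
  hence "smult (a1^e) (subresultant (degree Q2) Q0 Q1) = smult ((-1)^((degree Q0 - degree Q2)*(degree Q1 - degree Q2)) *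
     lead_coeff Q1^(degree Q0 - degree Q2) * (b1^(e-1) * b1) * lead_coeff Q2^(e - 1)) Q2"
    unfolding subresultant_smult_left[OF a1] e_def by (simp add: power_mult_distrib ac_simps)
  also have "b1^(e-1) * b1 = b1^e" using e by (metis power_Suc2)
  finally have "smult (a1^e) (subresultant (degree Q2) Q0 Q1) = smult ((-1)^((degree Q0 - degree Q2)*(degree Q1 - degree Q2)) *
     lead_coeff Q1^(degree Q0 - degree Q2) * b1^e * lead_coeff Q2^(e - 1)) Q2" by (simp add: ac_simps)
  from smult_cancel_eq[OF this] a1
  show ?thesis unfolding e_def[symmetric] by (simp add: power_divide field_simps)
qed




lemma PRS_dec:
  assumes "is_PRS A B Q L a bt" and "1 \<le> i" "i < i'" "i' \<le> L"
  shows "degree (Q i') < degree (Q i)"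
  using assms(3,4)
proof (induction i' rule: less_induct)
  case (less i')
  have dec: "\<And>x. 2 \<le> x \<Longrightarrow> x \<le> L \<Longrightarrow> degree (Q x) < degree (Q (x - 1))"
    using assms(1) unfolding is_PRS_def by auto
  obtain i'' where i'': "i' = Suc i''" using less.prems by (cases i', auto)
  have 1: "degree (Q i') < degree (Q i'')" using dec[of i'] less.prems assms(2) i'' by simp
  show ?case
  proof (cases "i'' = i")
    case True
    then show ?thesis using 1 by simp
  next
    case False
    hence "i < i''" using less.prems i'' by auto
    from less.IH[OF _ this] i'' less.prems 1 show ?thesis by auto
  qed
qed

lemma PRS_nonzero: assumes "is_PRS A B Q L a bt" "1 \<le> i" "i \<le> L" shows "Q i \<noteq> 0"
  using assms unfolding is_PRS_def by auto

lemma PRS_rel: assumes "is_PRS A B Q L a bt" "3 \<le> i" "i \<le> L"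
  shows "a i \<noteq> 0" "bt i \<noteq> 0" "\<exists>q. smult (a i) (Q (i - 2)) = q * Q (i - 1) + smult (bt i) (Q i)"
  using assms unfolding is_PRS_def by auto

lemma FT:
  fixes P :: "nat \<Rightarrow> nat \<Rightarrow> 'a::field_gcd poly"
  assumes prs: "is_PRS (P k 1) (P k 2) (P k) (l k) (\<alpha> k) (\<beta> k)" and L3: "3 \<le> l k"
  shows "subresultant (degree (P k (l k))) (P k 1) (P k 2) = smult (Bconst P l \<alpha> \<beta> k) (P k (l k))"
proof -
  define Q where "Q = P k"
  define L where "L = l k"
  define a where "a = \<alpha> k"
  define bt where "bt = \<beta> k"
  define n where "n = (\<lambda>i. degree (Q i))"
  define J where "J = n L"
  have prs: "is_PRS (Q 1) (Q 2) Q L a bt" using prs unfolding Q_def L_def a_def bt_def .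
  have L3: "3 \<le> L" using L3 L_def by simp
  note dec = PRS_dec[OF prs]
  note nz = PRS_nonzero[OF prs]
  note rel = PRS_rel[OF prs]
  define tm where "tm = (\<lambda>x. (bt x / a x)^(n (x-1) - J) * lead_coeff (Q (x-1))^(n (x-2) - n x)
     * (-1)^((n (x-2) - J)*(n (x-1) - J)))"
  have claim: "\<forall>i. 3 \<le> i \<longrightarrow> i \<le> L \<longrightarrow> L - i = m \<longrightarrow>
     subresultant J (Q (i-2)) (Q (i-1)) = smult (lead_coeff (Q L)^(n (L-1) - J - 1) * (\<Prod>x\<in>{i..L}. tm x)) (Q L)" for m
  proof (induction m)
    case 0
    show ?case
    proof (intro allI impI)
      fix i assume i: "3 \<le> i" "i \<le> L" "L - i = 0"
      hence iL: "i = L" by simp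
      obtain q where q: "smult (a L) (Q (L - 2)) = q * Q (L - 1) + smult (bt L) (Q L)" using rel(3)[OF L3 le_refl] by auto
      have d1: "degree (Q (L-1)) < degree (Q (L-2))" by (rule dec, insert L3, auto)
      have d2: "degree (Q L) < degree (Q (L-1))" by (rule dec, insert L3, auto)
      from prs_step_last[OF q rel(1,2)[OF L3 le_refl] nz[of L] d1 d2] L3
      show "subresultant J (Q (i-2)) (Q (i-1)) = smult (lead_coeff (Q L)^(n (L-1) - J - 1) * (\<Prod>x\<in>{i..L}. tm x)) (Q L)"
        unfolding iL J_def n_def tm_def by (simp add: ac_simps)
    qed
  next
    case (Suc m)
    show ?case
    proof (intro allI impI)
      fix i assume i: "3 \<le> i" "i \<le> L" "L - i = Suc m"
      hence iL: "i < L" by simp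
      have IH: "subresultant J (Q (Suc i-2)) (Q (Suc i-1)) = smult (lead_coeff (Q L)^(n (L-1) - J - 1) * (\<Prod>x\<in>{Suc i..L}. tm x)) (Q L)"
        using Suc.IH[rule_format, of "Suc i"] i by simp
      obtain q where q: "smult (a i) (Q (i - 2)) = q * Q (i - 1) + smult (bt i) (Q i)" using rel(3)[OF i(1,2)] by auto
      have d1: "degree (Q (i-1)) < degree (Q (i-2))" by (rule dec, insert i, auto)
      have d2: "degree (Q i) < degree (Q (i-1))" by (rule dec, insert i, auto)
      have JL: "J < degree (Q i)" unfolding J_def n_def by (rule dec, insert i iL, auto)
      have "subresultant J (Q (i-2)) (Q (i-1)) = smult (tm i) (subresultant J (Q (i-1)) (Q i))"
        using prs_step[OF q rel(1,2)[OF i(1,2)] nz[of i] d1 d2 JL] i unfolding tm_def n_def by simp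
      also have "subresultant J (Q (i-1)) (Q i) = subresultant J (Q (Suc i-2)) (Q (Suc i-1))"
        using i by (simp add: numeral_2_eq_2)
      also have "(\<Prod>x\<in>{i..L}. tm x) = tm i * (\<Prod>x\<in>{Suc i..L}. tm x)"
        using iL by (simp add: prod.atLeast_Suc_atMost)
      ultimately show "subresultant J (Q (i-2)) (Q (i-1)) = smult (lead_coeff (Q L)^(n (L-1) - J - 1) * (\<Prod>x\<in>{i..L}. tm x)) (Q L)"
        unfolding IH by (simp add: ac_simps)
    qed
  qed
  have S: "subresultant J (Q 1) (Q 2) = smult (lead_coeff (Q L)^(n (L-1) - J - 1) * (\<Prod>x\<in>{3..L}. tm x)) (Q L)"
    using claim[rule_format, of 3 "L - 3"] L3 by (simp add: numeral_3_eq_3 numeral_2_eq_2)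
  have B: "Bconst P l \<alpha> \<beta> k = lead_coeff (Q L)^(n (L-1) - J - 1) * (\<Prod>x\<in>{3..L}. tm x)"
  proof -
    have e1: "n (L - 1 + 1) = n L" using L3 by simp
    have e2: "(\<Prod>x\<in>{3..L}. (bt x / a x)^(n (x-1) - n L) * lead_coeff (Q (x-1))^((n (x-2) - n (x - 2 + 1)) + (n (x-1) - n (x-1+1)))
       * (-1)^((n (x-2) - n L)*(n (x-1) - n L))) = (\<Prod>x\<in>{3..L}. tm x)"
    proof (rule prod.cong[OF refl])
      fix x assume x: "x \<in> {3..L}"
      have a1: "x - 2 + 1 = x - 1" "x - 1 + 1 = x" using x by auto
      have "n x < n (x-1)" "n (x-1) < n (x-2)" unfolding n_def by (rule dec, insert x, auto)+
      hence "(n (x-2) - n (x - 2 + 1)) + (n (x-1) - n (x-1+1)) = n (x-2) - n x" unfolding a1 by simp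
      thus "(bt x / a x)^(n (x-1) - n L) * lead_coeff (Q (x-1))^((n (x-2) - n (x - 2 + 1)) + (n (x-1) - n (x-1+1)))
       * (-1)^((n (x-2) - n L)*(n (x-1) - n L)) = tm x" unfolding tm_def J_def by simp
    qed
    have "Bconst P l \<alpha> \<beta> k = lead_coeff (Q L)^(n (L-1) - n (L-1+1) - 1) * (\<Prod>x\<in>{3..L}. (bt x / a x)^(n (x-1) - n L) * lead_coeff (Q (x-1))^((n (x-2) - n (x - 2 + 1)) + (n (x-1) - n (x-1+1)))
       * (-1)^((n (x-2) - n L)*(n (x-1) - n L)))"
      unfolding Bconst_def Let_def Q_def L_def a_def bt_def n_def by (rule refl)
    also have "\<dots> = lead_coeff (Q L)^(n (L-1) - J - 1) * (\<Prod>x\<in>{3..L}. tm x)"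
      unfolding e1 e2 J_def ..
    finally show ?thesis .
  qed
  show ?thesis using S unfolding B J_def n_def Q_def L_def by simp
qed




lemma lap_row:
  fixes M :: "'a::comm_ring_1 mat"
  assumes MC: "M \<in> carrier_mat R C" and C: "C \<ge> 1" and r: "r < R" and CR: "C \<le> R"
  shows "det (tau_sub M C r) = (\<Sum>c<C. M $$ (r,c) * cofactor (tau_sub M C (C-1)) (C-1) c)"
proof -
  have T: "tau_sub M C r \<in> carrier_mat C C" by (simp add: tau_sub_def)
  have "det (tau_sub M C r) = (\<Sum>c<C. tau_sub M C r $$ (C-1,c) * cofactor (tau_sub M C r) (C-1) c)"
    by (rule laplace_expansion_row[OF T], insert C, simp)
  also have "\<dots> = (\<Sum>c<C. M $$ (r,c) * cofactor (tau_sub M C (C-1)) (C-1) c)"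
  proof (rule sum.cong[OF refl])
    fix c assume c: "c \<in> {..<C}"
    have "mat_delete (tau_sub M C r) (C-1) c = mat_delete (tau_sub M C (C-1)) (C-1) c"
      by (rule eq_matI, auto simp: mat_delete_def tau_sub_def)
    thus "tau_sub M C r $$ (C-1,c) * cofactor (tau_sub M C r) (C-1) c = M $$ (r,c) * cofactor (tau_sub M C (C-1)) (C-1) c"
      using c C unfolding cofactor_def by (simp add: tau_sub_def)
  qed
  finally show ?thesis .
qed

lemma rec_block_entries:
  fixes M :: "'a::comm_ring_1 mat"
  assumes MC: "M \<in> carrier_mat (C + J) C" and C: "C \<ge> 1" and jJ: "j + 1 < J"
  defines "b \<equiv> 2*J - 2*j - 1"
  shows "rec_block M J j \<in> carrier_mat (b*C + j) (b*C)"
    "\<And>r c. r < b*(C-1) \<Longrightarrow> c < b*C \<Longrightarrow> rec_block M J j $$ (r,c) = (if c div C = r div (C-1) then M $$ (r mod (C-1), c mod C) else 0)"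
    "\<And>\<rho> t cc. \<rho> < b + j \<Longrightarrow> t < b \<Longrightarrow> cc < C \<Longrightarrow> rec_block M J j $$ (b*(C-1) + \<rho>, t*C + cc) =
      (if t < J - j - 1 then (if t \<le> \<rho> \<and> \<rho> - t \<le> J then M $$ (C - 1 + (\<rho> - t), cc) else 0)
       else (if t - (J - j - 1) \<le> \<rho> \<and> \<rho> - (t - (J - j - 1)) < J
             then of_nat (J - (\<rho> - (t - (J - j - 1)))) * M $$ (C - 1 + (\<rho> - (t - (J - j - 1))), cc) else 0))"
proof -
  have dims: "dim_row M = C + J" "dim_col M = C" using MC by auto
  have U: "dim_row M - (J + 1) = C - 1" using dims by simp
  have bj: "2*J - j - 1 = b + j" unfolding b_def using jJ by simp
  have bC: "b*(C-1) + b = b*C" using C by (cases C) (auto simp: algebra_simps)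
  have rows: "b * (C-1) + (2*J - j - 1) = b*C + j" unfolding bj using bC by linarith
  have def: "rec_block M J j = mat (b*C + j) (b*C) (\<lambda>(r, c).
      let s = c div C; cc = c mod C in
      if r < b * (C-1) then
        (if s = r div (C-1) then M $$ (r mod (C-1), cc) else 0)
      else (let r' = r - b * (C-1) in
        if s < J - j - 1 then
          (if s \<le> r' \<and> r' - s \<le> J then M $$ ((C-1) + (r' - s), cc) else 0)
        else (let s' = s - (J - j - 1) in
          if s' \<le> r' \<and> r' - s' < J then of_nat (J - (r' - s')) * M $$ ((C-1) + (r' - s'), cc)
          else 0)))"
    unfolding rec_block_def Let_def U unfolding dims b_def[symmetric] rows ..
  show "rec_block M J j \<in> carrier_mat (b*C + j) (b*C)" unfolding def by simp
  show "\<And>r c. r < b*(C-1) \<Longrightarrow> c < b*C \<Longrightarrow> rec_block M J j $$ (r,c) = (if c div C = r div (C-1) then M $$ (r mod (C-1), c mod C) else 0)"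
  proof -
    fix r c assume r: "r < b*(C-1)" and c: "c < b*C"
    have "r < b*C + j" using r C by (meson diff_le_self le_add1 less_le_trans mult_le_mono2 order_trans)
    thus "rec_block M J j $$ (r,c) = (if c div C = r div (C-1) then M $$ (r mod (C-1), c mod C) else 0)"
      unfolding def using r c by (simp add: Let_def)
  qed
  show "\<And>\<rho> t cc. \<rho> < b + j \<Longrightarrow> t < b \<Longrightarrow> cc < C \<Longrightarrow> rec_block M J j $$ (b*(C-1) + \<rho>, t*C + cc) =
      (if t < J - j - 1 then (if t \<le> \<rho> \<and> \<rho> - t \<le> J then M $$ (C - 1 + (\<rho> - t), cc) else 0)
       else (if t - (J - j - 1) \<le> \<rho> \<and> \<rho> - (t - (J - j - 1)) < J
             then of_nat (J - (\<rho> - (t - (J - j - 1)))) * M $$ (C - 1 + (\<rho> - (t - (J - j - 1))), cc) else 0))"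
  proof -
    fix \<rho> t cc assume \<rho>: "\<rho> < b + j" and t: "t < b" and cc: "cc < C"
    have C0: "C > 0" using C by simp
    have r: "b*(C-1) + \<rho> < b*C + j" using \<rho> rows[unfolded b_def[symmetric]] jJ unfolding b_def by linarith
    note ba = block_aux[OF C0 t cc]
    show "rec_block M J j $$ (b*(C-1) + \<rho>, t*C + cc) =
      (if t < J - j - 1 then (if t \<le> \<rho> \<and> \<rho> - t \<le> J then M $$ (C - 1 + (\<rho> - t), cc) else 0)
       else (if t - (J - j - 1) \<le> \<rho> \<and> \<rho> - (t - (J - j - 1)) < J
             then of_nat (J - (\<rho> - (t - (J - j - 1)))) * M $$ (C - 1 + (\<rho> - (t - (J - j - 1))), cc) else 0))"
      unfolding def using r ba by (simp add: Let_def)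
  qed
qed




lemma rec_block_det:
  fixes M :: "'a::field_char_0 mat" and A :: "'a poly"
  assumes MC: "M \<in> carrier_mat (C + J) C" and C: "C \<ge> 1" and jJ: "j + 1 < J" and tau: "\<tau> \<le> j"
  and aA: "\<And>x. x \<le> J \<Longrightarrow> det (tau_sub M C (C - 1 + x)) = coeff A (J - x)"
  and lc: "coeff A J \<noteq> 0"
  defines "b \<equiv> 2*J - 2*j - 1"
  shows "det (tau_sub (rec_block M J j) (b*C) (b*C + j - \<tau> - 1)) =
    (-1)^((C-1) * (\<Sum>i\<in>{1..<b}. i)) * det (tau_sub (sres_mat J (J-1) A (pderiv A) j) b (b + j - \<tau> - 1))"
proof -
  note RB = rec_block_entries[OF MC C jJ, folded b_def]
  define X where "X = tau_sub (rec_block M J j) (b*C) (b*C + j - \<tau> - 1)"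
  define Y where "Y = tau_sub M C (C-1)"
  have C0: "C > 0" using C by simp
  have b1: "b \<ge> 1" unfolding b_def using jJ by simp
  have bC: "b*(C-1) + b = b*C" using C by (cases C) (auto simp: algebra_simps)
  have YC: "Y \<in> carrier_mat C C" unfolding Y_def tau_sub_def by simp
  have dY: "det Y \<noteq> 0" using aA[of 0] lc unfolding Y_def by simp
  have XC: "X \<in> carrier_mat (b*C) (b*C)" unfolding X_def tau_sub_def by simp
  have top: "X $$ (r,c) = (if c div C = r div (C-1) then Y $$ (r mod (C-1), c mod C) else 0)"
    if r: "r < b*(C-1)" and c: "c < b*C" for r c
  proof -
    have r1: "r < b*C - 1" using r bC b1 by linarith
    have C1: "C - 1 > 0" using r by (cases "C - 1", auto)
    have rm: "r mod (C-1) < C - 1" using C1 by simp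
    have "X $$ (r,c) = rec_block M J j $$ (r,c)" unfolding X_def tau_sub_def using r1 c by simp
    also have "\<dots> = (if c div C = r div (C-1) then M $$ (r mod (C-1), c mod C) else 0)" by (rule RB(2)[OF r c])
    also have "\<dots> = (if c div C = r div (C-1) then Y $$ (r mod (C-1), c mod C) else 0)"
      unfolding Y_def tau_sub_def using rm C0 by simp
    finally show ?thesis .
  qed
  have BD: "det X = (-1)^((C-1) * (\<Sum>i\<in>{1..<b}. i)) *
    det (mat b b (\<lambda>(i,t). \<Sum>c<C. X $$ (b*(C-1)+i, t*C + c) * cofactor Y (C-1) c))"
    by (rule block_det[OF C YC dY XC top])
  define a where "a = (\<lambda>x. coeff A (J - x))"
  have lap: "(\<Sum>c<C. M $$ (C - 1 + x, c) * cofactor Y (C-1) c) = a x" if x: "x \<le> J" for x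
  proof -
    have "det (tau_sub M C (C - 1 + x)) = (\<Sum>c<C. M $$ (C - 1 + x,c) * cofactor (tau_sub M C (C-1)) (C-1) c)"
      by (rule lap_row[OF MC C], insert x C, auto)
    thus ?thesis using aA[OF x] unfolding a_def Y_def by simp
  qed
  have mat_eq: "mat b b (\<lambda>(i,t). \<Sum>c<C. X $$ (b*(C-1)+i, t*C + c) * cofactor Y (C-1) c)
     = tau_sub (sres_mat J (J-1) A (pderiv A) j) b (b + j - \<tau> - 1)"
  proof (rule eq_matI)
    fix i t assume "i < dim_row (tau_sub (sres_mat J (J-1) A (pderiv A) j) b (b + j - \<tau> - 1))"
      "t < dim_col (tau_sub (sres_mat J (J-1) A (pderiv A) j) b (b + j - \<tau> - 1))"
    hence i: "i < b" and t: "t < b" unfolding tau_sub_def by auto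
    define \<rho> where "\<rho> = (if i < b - 1 then i else b + j - \<tau> - 1)"
    have \<rho>: "\<rho> < b + j" unfolding \<rho>_def using i b1 by auto
    have Xrow: "X $$ (b*(C-1)+i, t*C+c) = rec_block M J j $$ (b*(C-1) + \<rho>, t*C + c)" if c: "c < C" for c
    proof -
      have tc: "t*C + c < b*C" using block_aux[OF C0 t c] by simp
      show ?thesis
      proof (cases "i < b - 1")
        case True
        hence "b*(C-1)+i < b*C - 1" using bC by linarith
        thus ?thesis unfolding X_def tau_sub_def \<rho>_def using True tc by simp
      next
        case False
        hence nlt: "\<not> b*(C-1)+i < b*C - 1" using bC i by linarith
        have eq: "b*C + j - \<tau> - 1 = b*(C-1) + (b + j - \<tau> - 1)" using bC b1 tau by linarith
        have lt: "b*(C-1)+i < b*C" using bC i by linarith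
        have "X $$ (b*(C-1)+i, t*C+c) = rec_block M J j $$ (b*C + j - \<tau> - 1, t*C+c)"
          unfolding X_def tau_sub_def using nlt lt tc by (subst index_mat) auto
        thus ?thesis unfolding eq \<rho>_def using False by simp
      qed
    qed
    define e where "e = J - j - 1"
    have lhs: "(\<Sum>c<C. X $$ (b*(C-1)+i, t*C + c) * cofactor Y (C-1) c) =
      (if t < e then (if t \<le> \<rho> \<and> \<rho> - t \<le> J then a (\<rho> - t) else 0)
       else (if t - e \<le> \<rho> \<and> \<rho> - (t - e) < J then of_nat (J - (\<rho> - (t - e))) * a (\<rho> - (t - e)) else 0))"
    proof -
      have "(\<Sum>c<C. X $$ (b*(C-1)+i, t*C + c) * cofactor Y (C-1) c) =
        (\<Sum>c<C. (if t < e then (if t \<le> \<rho> \<and> \<rho> - t \<le> J then M $$ (C - 1 + (\<rho> - t), c) else 0)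
         else (if t - e \<le> \<rho> \<and> \<rho> - (t - e) < J
             then of_nat (J - (\<rho> - (t - e))) * M $$ (C - 1 + (\<rho> - (t - e)), c) else 0)) * cofactor Y (C-1) c)"
        by (rule sum.cong[OF refl], unfold Xrow[OF lessThan_iff[THEN iffD1]] RB(3)[OF \<rho> t lessThan_iff[THEN iffD1]] e_def, simp)
      also have "\<dots> = (if t < e then (if t \<le> \<rho> \<and> \<rho> - t \<le> J then (\<Sum>c<C. M $$ (C - 1 + (\<rho> - t), c) * cofactor Y (C-1) c) else 0)
       else (if t - e \<le> \<rho> \<and> \<rho> - (t - e) < J then of_nat (J - (\<rho> - (t - e))) * (\<Sum>c<C. M $$ (C - 1 + (\<rho> - (t - e)), c) * cofactor Y (C-1) c) else 0))"
        by (auto simp: sum_distrib_left mult.assoc)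
      also have "\<dots> = (if t < e then (if t \<le> \<rho> \<and> \<rho> - t \<le> J then a (\<rho> - t) else 0)
       else (if t - e \<le> \<rho> \<and> \<rho> - (t - e) < J then of_nat (J - (\<rho> - (t - e))) * a (\<rho> - (t - e)) else 0))"
        using lap[of "\<rho> - t"] lap[of "\<rho> - (t - e)"] by auto
      finally show ?thesis .
    qed
    have rhs: "tau_sub (sres_mat J (J-1) A (pderiv A) j) b (b + j - \<tau> - 1) $$ (i,t) =
      sres_mat J (J-1) A (pderiv A) j $$ (\<rho>, t)"
      unfolding tau_sub_def \<rho>_def using i t by simp
    have dims: "J + (J - 1) - j = b + j" "J + (J - 1) - 2*j = b" "J - 1 - j = e" unfolding b_def e_def using jJ by auto
    have sm: "sres_mat J (J-1) A (pderiv A) j $$ (\<rho>, t) =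
      (if t < e then (if t \<le> \<rho> \<and> \<rho> - t \<le> J then coeff A (J - (\<rho> - t)) else 0)
       else (if t - e \<le> \<rho> \<and> \<rho> - (t - e) \<le> J - 1 then coeff (pderiv A) (J - 1 - (\<rho> - (t - e))) else 0))"
      unfolding sres_mat_def dims Let_def using \<rho> t by simp
    have J1: "J \<ge> 1" using jJ by simp
    have pd: "coeff (pderiv A) (J - 1 - x) = of_nat (J - x) * a x" if "x < J" for x
    proof -
      have "Suc (J - 1 - x) = J - x" using that by simp
      thus ?thesis unfolding coeff_pderiv a_def by simp
    qed
    have le: "(x \<le> J - 1) = (x < J)" for x using J1 by auto
    show "mat b b (\<lambda>(i,t). \<Sum>c<C. X $$ (b*(C-1)+i, t*C + c) * cofactor Y (C-1) c) $$ (i,t) =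
      tau_sub (sres_mat J (J-1) A (pderiv A) j) b (b + j - \<tau> - 1) $$ (i,t)"
      unfolding rhs sm using i t lhs pd unfolding le by (auto simp: a_def)
  qed (auto simp: tau_sub_def)
  from BD[unfolded mat_eq] show ?thesis unfolding X_def .
qed




lemma sres_smult_det:
  fixes P :: "'a::field_char_0 poly"
  assumes dP: "degree P = J" and jJ: "j + 1 < J" and tau: "\<tau> \<le> j"
  defines "b \<equiv> 2*J - 2*j - 1"
  shows "det (tau_sub (sres_mat J (J-1) (smult c P) (pderiv (smult c P)) j) b (b + j - \<tau> - 1))
    = c^b * det (sres_tau P (pderiv P) j \<tau>)"
proof -
  have sm: "sres_mat J (J-1) (smult c P) (pderiv (smult c P)) j = c \<cdot>\<^sub>m sres_mat J (J-1) P (pderiv P) j"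
    unfolding pderiv_smult by (rule eq_matI, auto simp: sres_mat_def Let_def)
  have dims: "J + (J - 1) - 2*j = b" "J + (J - 1) - j = b + j" unfolding b_def using jJ by auto
  have ts: "tau_sub (c \<cdot>\<^sub>m sres_mat J (J-1) P (pderiv P) j) b (b + j - \<tau> - 1) =
     c \<cdot>\<^sub>m tau_sub (sres_mat J (J-1) P (pderiv P) j) b (b + j - \<tau> - 1)"
  proof -
    define S where "S = sres_mat J (J-1) P (pderiv P) j"
    have SC: "dim_row S = b + j" "dim_col S = b" unfolding S_def sres_mat_def
      using dims by (simp_all del: One_nat_def)
    show ?thesis unfolding S_def[symmetric]
      by (rule eq_matI, insert SC, auto simp: tau_sub_def)
  qed
  have dpd: "degree (pderiv P) = J - 1" using dP by (simp add: degree_pderiv)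
  have st: "sres_tau P (pderiv P) j \<tau> = tau_sub (sres_mat J (J-1) P (pderiv P) j) b (b + j - \<tau> - 1)"
    unfolding sres_tau_def Let_def dP dpd dims by (simp add: diff_diff_add)
  show ?thesis unfolding sm ts st by (simp add: tau_sub_def)
qed




context
  fixes F G :: "'a::{field_char_0,field_gcd} poly" and t :: nat and P :: "nat \<Rightarrow> nat \<Rightarrow> 'a poly"
    and l :: "nat \<Rightarrow> nat" and \<alpha> \<beta> :: "nat \<Rightarrow> nat \<Rightarrow> 'a"
  assumes H: "is_complete_recursive_PRS F G t P l \<alpha> \<beta>" and L3: "\<forall>k\<in>{1..<t}. l k \<ge> 3"
    and FG: "degree F > degree G" "degree G > 0"
begin

lemma prs: "1 \<le> k \<Longrightarrow> k \<le> t \<Longrightarrow> is_PRS (P k 1) (P k 2) (P k) (l k) (\<alpha> k) (\<beta> k)"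
  using H unfolding is_complete_recursive_PRS_def by auto

lemma P1: "P 1 1 = F" "P 1 2 = G" using H unfolding is_complete_recursive_PRS_def by auto

lemma Pk: "2 \<le> k \<Longrightarrow> k \<le> t \<Longrightarrow> P k 1 = P (k-1) (l (k-1)) \<and> P k 2 = pderiv (P k 1)"
  using H unfolding is_complete_recursive_PRS_def by auto

lemma deg_pos: "1 \<le> k \<Longrightarrow> k < t \<Longrightarrow> degree (P k (l k)) > 0"
  using H unfolding is_complete_recursive_PRS_def by auto

lemma jless: "1 \<le> k \<Longrightarrow> k < t \<Longrightarrow> jseq F P l k < degree (P k 2)"
proof -
  assume k: "1 \<le> k" "k < t"
  have "l k \<ge> 3" using L3 k by auto
  thus ?thesis unfolding jseq_def using k PRS_dec[OF prs[of k], of 2 "l k"] by auto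
qed

lemma deg12: "2 \<le> k \<Longrightarrow> k \<le> t \<Longrightarrow> degree (P k 1) = jseq F P l (k-1) \<and> degree (P k 2) = jseq F P l (k-1) - 1"
  using Pk[of k] unfolding jseq_def by (auto simp: degree_pderiv)

lemma dims: "1 \<le> k \<Longrightarrow> k \<le> t \<Longrightarrow> \<forall>j < degree (P k 2).
  rsm F G (jseq F P l) k j \<in> carrier_mat (dim_col (rsm F G (jseq F P l) k j) + j) (dim_col (rsm F G (jseq F P l) k j))
  \<and> dim_col (rsm F G (jseq F P l) k j) \<ge> 1"
proof (induction k rule: nat_induct_at_least)
  case base
  show ?case
  proof (intro allI impI)
    fix j assume j: "j < degree (P 1 2)"
    hence j: "j < degree G" using P1 by simp
    thus "rsm F G (jseq F P l) 1 j \<in> carrier_mat (dim_col (rsm F G (jseq F P l) 1 j) + j) (dim_col (rsm F G (jseq F P l) 1 j))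
      \<and> dim_col (rsm F G (jseq F P l) 1 j) \<ge> 1"
    proof -
      have r1: "rsm F G (jseq F P l) 1 j = sres_mat (degree F) (degree G) F G j"
        using rsm.simps(2)[of F G "jseq F P l" j] by (simp only: One_nat_def)
      have d: "dim_row (sres_mat (degree F) (degree G) F G j) = degree F + degree G - j"
        "dim_col (sres_mat (degree F) (degree G) F G j) = degree F + degree G - 2*j"
        by (simp_all add: sres_mat_def)
      show ?thesis unfolding r1 carrier_mat_def mem_Collect_eq d using j FG by linarith
    qed
  qed
next
  case (Suc k)
  obtain k' where k': "k = Suc k'" using Suc.hyps by (cases k, auto)
  define J where "J = jseq F P l k"
  define M where "M = rsm F G (jseq F P l) k J"
  define C where "C = dim_col M"
  have kt: "k < t" using Suc.prems by simp
  have JM: "J < degree (P k 2)" unfolding J_def by (rule jless[OF Suc.hyps kt])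
  from Suc.IH[OF less_imp_le[OF kt], rule_format, OF JM]
  have MC: "M \<in> carrier_mat (C + J) C" and C: "C \<ge> 1" unfolding M_def C_def by auto
  show ?case
  proof (intro allI impI)
    fix j assume j: "j < degree (P (Suc k) 2)"
    have "degree (P (Suc k) 2) = J - 1" using deg12[of "Suc k"] Suc.prems Suc.hyps unfolding J_def by auto
    hence jJ: "j + 1 < J" using j by auto
    have rsm: "rsm F G (jseq F P l) (Suc k) j = rec_block M J j" unfolding M_def J_def k' by simp
    note RB = rec_block_entries(1)[OF MC C jJ]
    have b1: "2*J - 2*j - 1 \<ge> 1" using jJ by simp
    have "(2*J - 2*j - 1) * C \<ge> 1" using b1 C by (metis mult_le_mono One_nat_def mult_1)
    thus "rsm F G (jseq F P l) (Suc k) j \<in> carrier_mat (dim_col (rsm F G (jseq F P l) (Suc k) j) + j) (dim_col (rsm F G (jseq F P l) (Suc k) j))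
      \<and> dim_col (rsm F G (jseq F P l) (Suc k) j) \<ge> 1"
      unfolding rsm using RB by auto
  qed
qed

lemma colrec: "dim_col (rsm F G jj (Suc (Suc k)) j) = (2 * jj (Suc k) - 2*j - 1) * dim_col (rsm F G jj (Suc k) (jj (Suc k)))"
  by (simp add: rec_block_def Let_def)

lemma uk_step: "2 \<le> k \<Longrightarrow> uk F G P l k = bkj F P l k (jseq F P l k) * uk F G P l (k-1)"
proof -
  assume k: "2 \<le> k"
  show ?thesis
  proof (cases "k = 2")
    case True
    thus ?thesis unfolding uk_def ukj_def by simp
  next
    case False
    define k' where "k' = k - 3"
    have k': "k = Suc (Suc (Suc k'))" using k False unfolding k'_def by simp
    have "(\<Prod>i\<in>{2..k-1}. 2 * jseq F P l (i - 1) - 2 * jseq F P l i - 1) =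
      (\<Prod>i\<in>{2..k-2}. 2 * jseq F P l (i - 1) - 2 * jseq F P l i - 1) * (2 * jseq F P l (k-2) - 2 * jseq F P l (k-1) - 1)"
      unfolding k' by (simp add: prod.cl_ivl_Suc)
    moreover have "bkj F P l (k-1) (jseq F P l (k-1)) = 2 * jseq F P l (k-2) - 2 * jseq F P l (k-1) - 1"
      unfolding bkj_def k' by simp
    ultimately show ?thesis unfolding uk_def ukj_def using k' by (simp add: ac_simps)
  qed
qed

lemma uk_col: "1 \<le> k \<Longrightarrow> k < t \<Longrightarrow> dim_col (rsm F G (jseq F P l) k (jseq F P l k)) = uk F G P l k"
proof (induction k rule: nat_induct_at_least)
  case base
  then show ?case by (simp add: uk_def sres_mat_def)
next
  case (Suc k)
  obtain k' where k': "k = Suc k'" using Suc.hyps by (cases k, auto)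
  have "dim_col (rsm F G (jseq F P l) (Suc k) (jseq F P l (Suc k))) =
    bkj F P l (Suc k) (jseq F P l (Suc k)) * dim_col (rsm F G (jseq F P l) k (jseq F P l k))"
    unfolding k' colrec bkj_def by simp
  also have "\<dots> = uk F G P l (Suc k)" using Suc.IH Suc.prems Suc.hyps uk_step[of "Suc k"] by simp
  finally show ?case .
qed

lemma Bconst_nz: "1 \<le> k \<Longrightarrow> k \<le> t \<Longrightarrow> Bconst P l \<alpha> \<beta> k \<noteq> 0"
proof -
  assume k: "1 \<le> k" "k \<le> t"
  note p = prs[OF k]
  have L2: "2 \<le> l k" using p unfolding is_PRS_def by auto
  have nz: "P k i \<noteq> 0" if "1 \<le> i" "i \<le> l k" for i using PRS_nonzero[OF p that] .
  have ab: "\<alpha> k i \<noteq> 0" "\<beta> k i \<noteq> 0" if "3 \<le> i" "i \<le> l k" for i using PRS_rel[OF p that] by auto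
  have A: "lead_coeff (P k (l k)) \<noteq> 0" using nz[of "l k"] L2 by simp
  have B: "(\<beta> k i / \<alpha> k i) ^ x * lead_coeff (P k (i-1)) ^ y * (-1::'a) ^ z \<noteq> 0"
    if i: "i \<in> {3..l k}" for i x y z
  proof -
    have "\<beta> k i / \<alpha> k i \<noteq> 0" using ab[of i] i by simp
    moreover have "P k (i-1) \<noteq> 0" by (rule nz, insert i, auto)
    hence "lead_coeff (P k (i-1)) \<noteq> 0" by simp
    ultimately show ?thesis by simp
  qed
  have "(\<Prod>i\<in>{3..l k}. (\<beta> k i / \<alpha> k i) ^ (degree (P k (i - 1)) - degree (P k (l k))) *
        lead_coeff (P k (i - 1)) ^ (degree (P k (i - 2)) - degree (P k (i - 2 + 1)) + (degree (P k (i - 1)) - degree (P k (i - 1 + 1)))) *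
        (- 1) ^ ((degree (P k (i - 2)) - degree (P k (l k))) * (degree (P k (i - 1)) - degree (P k (l k))))) \<noteq> 0"
    unfolding prod_zero_iff[OF finite_atLeastAtMost] using B by blast
  thus ?thesis unfolding Bconst_def Let_def by (rule no_zero_divisors[OF power_not_zero[OF A]])
qed

lemma Rbar_nz: "i < t \<Longrightarrow> Rbar F G P l \<alpha> \<beta> i \<noteq> 0"
proof (induction i)
  case 0
  then show ?case by simp
next
  case (Suc i)
  have r: "rkj F G P l (Suc i) (jseq F P l (Suc i)) \<noteq> 0" unfolding rkj_def by simp
  have B: "Bconst P l \<alpha> \<beta> (Suc i) \<noteq> 0" using Bconst_nz[of "Suc i"] Suc.prems by simp
  have R: "Rbar F G P l \<alpha> \<beta> i \<noteq> 0" using Suc.IH Suc.prems by simp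
  have eq: "Rbar F G P l \<alpha> \<beta> (Suc i) = Rbar F G P l \<alpha> \<beta> i ^ bkj F P l (Suc i) (jseq F P l (Suc i)) *
     rkj F G P l (Suc i) (jseq F P l (Suc i)) * Bconst P l \<alpha> \<beta> (Suc i)" by (rule Rbar.simps(2))
  show ?case unfolding eq by (intro no_zero_divisors power_not_zero R r B)
qed

lemma main_ind: "1 \<le> k \<Longrightarrow> k \<le> t \<Longrightarrow> \<forall>j < degree (P k 2). \<forall>\<tau> \<le> j.
  det (rsm_tau F G (jseq F P l) k j \<tau>) =
    Rbar F G P l \<alpha> \<beta> (k - 1) ^ bkj F P l k j * rkj F G P l k j * det (sres_tau (P k 1) (P k 2) j \<tau>)"
proof (induction k rule: nat_induct_at_least)
  case base
  show ?case
  proof (intro allI impI)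
    fix j \<tau> assume j: "j < degree (P 1 2)" and tau: "\<tau> \<le> j"
    hence j: "j < degree G" using P1 by simp
    have r1: "rsm F G (jseq F P l) 1 j = sres_mat (degree F) (degree G) F G j"
      using rsm.simps(2)[of F G "jseq F P l" j] by (simp only: One_nat_def)
    have d: "dim_col (sres_mat (degree F) (degree G) F G j) = degree F + degree G - 2*j"
      by (simp add: sres_mat_def)
    have a: "degree F + degree G - 2*j + j - \<tau> - 1 = degree F + degree G - j - \<tau> - 1" using j FG by linarith
    have "rsm_tau F G (jseq F P l) 1 j \<tau> = sres_tau (P 1 1) (P 1 2) j \<tau>"
      unfolding rsm_tau_def sres_tau_def Let_def r1 d P1 a ..
    thus "det (rsm_tau F G (jseq F P l) 1 j \<tau>) =
      Rbar F G P l \<alpha> \<beta> (1 - 1) ^ bkj F P l 1 j * rkj F G P l 1 j * det (sres_tau (P 1 1) (P 1 2) j \<tau>)"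
      by (simp add: bkj_def rkj_def)
  qed
next
  case (Suc k)
  obtain k' where k': "k = Suc k'" using Suc.hyps by (cases k, auto)
  define J where "J = jseq F P l k"
  define M where "M = rsm F G (jseq F P l) k J"
  define C where "C = dim_col M"
  have kt: "k < t" using Suc.prems by simp
  have JM: "J < degree (P k 2)" unfolding J_def by (rule jless[OF Suc.hyps kt])
  from dims[OF Suc.hyps less_imp_le[OF kt], rule_format, OF JM]
  have MC: "M \<in> carrier_mat (C + J) C" and C: "C \<ge> 1" unfolding M_def C_def by auto
  have IH: "\<And>\<tau>. \<tau> \<le> J \<Longrightarrow> det (rsm_tau F G (jseq F P l) k J \<tau>) =
    Rbar F G P l \<alpha> \<beta> (k - 1) ^ bkj F P l k J * rkj F G P l k J * det (sres_tau (P k 1) (P k 2) J \<tau>)"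
    using Suc.IH[OF less_imp_le[OF kt]] JM by auto
  have prsk: "is_PRS (P k 1) (P k 2) (P k) (l k) (\<alpha> k) (\<beta> k)" by (rule prs[OF Suc.hyps less_imp_le[OF kt]])
  have lk: "3 \<le> l k" using L3 Suc.hyps kt by auto
  have dJ: "degree (P k (l k)) = J" unfolding J_def jseq_def using Suc.hyps by simp
  have Pk1: "P (Suc k) 1 = P k (l k)" "P (Suc k) 2 = pderiv (P (Suc k) 1)" using Pk[of "Suc k"] Suc.prems Suc.hyps by auto
  have d21: "degree (P k 2) \<le> degree (P k 1)" using prsk unfolding is_PRS_def by auto
  have FTk: "subresultant J (P k 1) (P k 2) = smult (Bconst P l \<alpha> \<beta> k) (P (Suc k) 1)"
    using FT[of P k l \<alpha> \<beta>, OF prsk lk] unfolding dJ Pk1(1) .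
  have Rk: "Rbar F G P l \<alpha> \<beta> k = Rbar F G P l \<alpha> \<beta> (k - 1) ^ bkj F P l k J * rkj F G P l k J * Bconst P l \<alpha> \<beta> k"
    unfolding k' J_def by simp
  define A where "A = smult (Rbar F G P l \<alpha> \<beta> k) (P (Suc k) 1)"
  have aA: "det (tau_sub M C (C - 1 + x)) = coeff A (J - x)" if x: "x \<le> J" for x
  proof -
    have "rsm_tau F G (jseq F P l) k J (J - x) = tau_sub M C (C - 1 + x)"
    proof -
      have "C + J - (J - x) - 1 = C - 1 + x" using x C by linarith
      thus ?thesis unfolding rsm_tau_def Let_def M_def[symmetric] C_def[symmetric] by (simp only:)
    qed
    hence "det (tau_sub M C (C - 1 + x)) = Rbar F G P l \<alpha> \<beta> (k - 1) ^ bkj F P l k J * rkj F G P l k J *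
      coeff (subresultant J (P k 1) (P k 2)) (J - x)"
      using IH[of "J - x"] det_sres_tau[OF JM d21, of "J - x"] by simp
    also have "\<dots> = coeff A (J - x)" unfolding FTk A_def Rk by simp
    finally show ?thesis .
  qed
  have l2: "2 \<le> l (Suc k)" using prs[of "Suc k"] Suc.prems unfolding is_PRS_def by auto
  have Pnz: "P (Suc k) 1 \<noteq> 0" using PRS_nonzero[OF prs[of "Suc k"], of 1] Suc.prems l2 by simp
  have dA: "degree (P (Suc k) 1) = J" using dJ Pk1 by simp
  have "coeff (P (Suc k) 1) J \<noteq> 0" using Pnz dA by (metis leading_coeff_0_iff)
  hence lc: "coeff A J \<noteq> 0" unfolding A_def using Rbar_nz[OF kt] by simp
  show ?case
  proof (intro allI impI)
    fix j \<tau> assume j: "j < degree (P (Suc k) 2)" and tau: "\<tau> \<le> j"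
    have "degree (P (Suc k) 2) = J - 1" using deg12[of "Suc k"] Suc.prems Suc.hyps unfolding J_def by auto
    hence jJ: "j + 1 < J" using j by auto
    define b where "b = 2*J - 2*j - 1"
    have rsm: "rsm F G (jseq F P l) (Suc k) j = rec_block M J j" unfolding M_def J_def k' by simp
    have RBC: "rec_block M J j \<in> carrier_mat (b*C + j) (b*C)"
      using rec_block_entries(1)[OF MC C jJ] unfolding b_def .
    have LHS: "rsm_tau F G (jseq F P l) (Suc k) j \<tau> = tau_sub (rec_block M J j) (b*C) (b*C + j - \<tau> - 1)"
      unfolding rsm_tau_def Let_def rsm using RBC by simp
    have e1: "det (tau_sub (rec_block M J j) (b*C) (b*C + j - \<tau> - 1)) =
      (-1)^((C-1) * (\<Sum>i\<in>{1..<b}. i)) * det (tau_sub (sres_mat J (J-1) A (pderiv A) j) b (b + j - \<tau> - 1))"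
      unfolding b_def by (rule rec_block_det[OF MC C jJ tau aA lc])
    have e2: "det (tau_sub (sres_mat J (J-1) A (pderiv A) j) b (b + j - \<tau> - 1)) =
       Rbar F G P l \<alpha> \<beta> k ^ b * det (sres_tau (P (Suc k) 1) (pderiv (P (Suc k) 1)) j \<tau>)"
      unfolding A_def b_def by (rule sres_smult_det[OF dA jJ tau])
    have bk: "bkj F P l (Suc k) j = b" unfolding bkj_def b_def J_def using Suc.hyps by simp
    have rk: "rkj F G P l (Suc k) j = (-1)^((C-1) * (\<Sum>i\<in>{1..<b}. i))"
      unfolding rkj_def bk using uk_col[OF Suc.hyps kt] Suc.hyps unfolding C_def M_def J_def by simp
    show "det (rsm_tau F G (jseq F P l) (Suc k) j \<tau>) =
      Rbar F G P l \<alpha> \<beta> (Suc k - 1) ^ bkj F P l (Suc k) j * rkj F G P l (Suc k) j *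
      det (sres_tau (P (Suc k) 1) (P (Suc k) 2) j \<tau>)"
      unfolding LHS e1 e2 bk rk Pk1(2)[symmetric] by simp
  qed
qed

end



theorem mainTheorem3:
  fixes F G :: "'a::{field_char_0,field_gcd} poly"
    and t :: nat and P :: "nat \<Rightarrow> nat \<Rightarrow> 'a poly" and l :: "nat \<Rightarrow> nat"
    and \<alpha> \<beta> :: "nat \<Rightarrow> nat \<Rightarrow> 'a"
  assumes "F \<noteq> 0" and "G \<noteq> 0"
    and "degree F > degree G" and "degree G > 0"
    and "is_complete_recursive_PRS F G t P l \<alpha> \<beta>"
    and "\<forall>k\<in>{1..<t}. l k \<ge> 3"
    and "k \<in> {1..t}" and "j < degree (P k 2)" and "\<tau> \<le> j"
  shows "det (rsm_tau F G (jseq F P l) k j \<tau>) =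
         Rbar F G P l \<alpha> \<beta> (k - 1) ^ bkj F P l k j * rkj F G P l k j *
         det (sres_tau (P k 1) (P k 2) j \<tau>)"
proof -
  have k: "1 \<le> k" "k \<le> t" using assms(7) by auto
  show ?thesis
    using main_ind[OF assms(5) assms(6) assms(3) assms(4) k] assms(8) assms(9) by blast
qed

end
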